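(* Let $G$ be a cyclically $4$-edge-connected cubic graph and $e$ an edge of $G$ contained in some cyclic $4$-edge-cut of $G$. Then there exist vertex sets $A_1\subseteq A_2\subseteq\cdots\subseteq A_k$, with $B_i=V(G)\setminus A_i$, such that every cyclic $4$-edge-cut of $G$ containing $e$ equals $E(A_i,B_i)$ for some $i\in\{1,\dots,k\}$.
   Context: Graphs may have parallel edges. For a partition $\{A,B\}$ of $V(G)$, $E(A,B)$ is the set of edges between $A$ and $B$; it is a $4$-edge-cut if it has exactly four edges, and cyclic if both $G[A]$ and $G[B]$ contain a cycle. $G$ is cyclically $4$-edge-connected if it has no cyclic edge-cut with fewer than four edges. *)

theory Defs
  imports Main
begin

text \<open>A finite loopless multigraph: vertex set V, edge set E (edges are abstract
  objects, so parallel edges are allowed), and each edge has a set of exactly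
  two distinct endpoints in V.\<close>
definition multigraph :: "'v set \<Rightarrow> 'e set \<Rightarrow> ('e \<Rightarrow> 'v set) \<Rightarrow> bool" where
  "multigraph V E ends \<longleftrightarrow> finite V \<and> finite E \<and>
     (\<forall>e\<in>E. ends e \<subseteq> V \<and> card (ends e) = 2)"

definition degree :: "'e set \<Rightarrow> ('e \<Rightarrow> 'v set) \<Rightarrow> 'v \<Rightarrow> nat" where
  "degree E ends v = card {e\<in>E. v \<in> ends e}"

definition cubic :: "'v set \<Rightarrow> 'e set \<Rightarrow> ('e \<Rightarrow> 'v set) \<Rightarrow> bool" where
  "cubic V E ends \<longleftrightarrow> multigraph V E ends \<and> (\<forall>v\<in>V. degree E ends v = 3)"

text \<open>The induced subgraph G[A] contains a cycle: distinct vertices v_0..v_{n-1} in A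
  and distinct edges e_0..e_{n-1}, n >= 2, where e_i joins v_i and v_{i+1 mod n}
  (n = 2 corresponds to a pair of parallel edges).\<close>
definition has_cycle_in :: "'e set \<Rightarrow> ('e \<Rightarrow> 'v set) \<Rightarrow> 'v set \<Rightarrow> bool" where
  "has_cycle_in E ends A \<longleftrightarrow>
     (\<exists>vs es. length vs \<ge> 2 \<and> length es = length vs \<and> distinct vs \<and> distinct es \<and>
        set vs \<subseteq> A \<and> set es \<subseteq> E \<and>
        (\<forall>i<length vs. ends (es ! i) = {vs ! i, vs ! ((i + 1) mod length vs)}))"

definition edge_cut :: "'e set \<Rightarrow> ('e \<Rightarrow> 'v set) \<Rightarrow> 'v set \<Rightarrow> 'v set \<Rightarrow> 'e set" where
  "edge_cut E ends A B = {e\<in>E. ends e \<inter> A \<noteq> {} \<and> ends e \<inter> B \<noteq> {}}"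

definition cyclic_partition :: "'v set \<Rightarrow> 'e set \<Rightarrow> ('e \<Rightarrow> 'v set) \<Rightarrow> 'v set \<Rightarrow> 'v set \<Rightarrow> bool" where
  "cyclic_partition V E ends A B \<longleftrightarrow>
     A \<union> B = V \<and> A \<inter> B = {} \<and> A \<noteq> {} \<and> B \<noteq> {} \<and>
     has_cycle_in E ends A \<and> has_cycle_in E ends B"

definition cyclic_k_edge_cut :: "nat \<Rightarrow> 'v set \<Rightarrow> 'e set \<Rightarrow> ('e \<Rightarrow> 'v set) \<Rightarrow> 'e set \<Rightarrow> bool" where
  "cyclic_k_edge_cut k V E ends F \<longleftrightarrow>
     (\<exists>A B. cyclic_partition V E ends A B \<and> F = edge_cut E ends A B \<and> card F = k)"

definition cyclically_4_edge_connected :: "'v set \<Rightarrow> 'e set \<Rightarrow> ('e \<Rightarrow> 'v set) \<Rightarrow> bool" where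
  "cyclically_4_edge_connected V E ends \<longleftrightarrow>
     (\<forall>A B. cyclic_partition V E ends A B \<longrightarrow> card (edge_cut E ends A B) \<ge> 4)"

end

theory Submission
  imports Defs
begin


lemma card_filter_sum: "finite E \<Longrightarrow> card {f\<in>E. P f} = (\<Sum>f\<in>E. if P f then 1 else (0::nat))"
  by (simp add: sum.If_cases Int_def conj_commute)

locale cubicG =
  fixes V :: "'v set" and E :: "'e set" and ends :: "'e \<Rightarrow> 'v set"
  assumes cub: "cubic V E ends"
begin

lemma finV: "finite V" and finE: "finite E"
  using cub by (auto simp: cubic_def multigraph_def)

lemma ends_sub: "f \<in> E \<Longrightarrow> ends f \<subseteq> V"
  using cub by (auto simp: cubic_def multigraph_def)

lemma ends2: "f \<in> E \<Longrightarrow> \<exists>p q. p \<noteq> q \<and> ends f = {p, q}"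
  using cub unfolding cubic_def multigraph_def card_2_iff by blast

lemma deg3: "w \<in> V \<Longrightarrow> card {f\<in>E. w \<in> ends f} = 3"
  using cub by (auto simp: cubic_def degree_def)

definition cutof :: "'v set \<Rightarrow> 'e set" where
  "cutof X = edge_cut E ends X (V - X)"

lemma cut_mem: "f \<in> cutof X \<longleftrightarrow> f \<in> E \<and> ends f \<inter> X \<noteq> {} \<and> ends f \<inter> (V - X) \<noteq> {}"
  by (simp add: cutof_def edge_cut_def)

lemma card_cut_sum: "card (cutof X) = (\<Sum>f\<in>E. if f \<in> cutof X then 1 else (0::nat))"
proof -
  have "cutof X = {f\<in>E. f \<in> cutof X}" by (auto simp: cut_mem)
  then show ?thesis using card_filter_sum[OF finE, of "\<lambda>f. f \<in> cutof X"] by simp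
qed

lemma cut_compl: "X \<subseteq> V \<Longrightarrow> cutof (V - X) = cutof X"
  by (auto simp: cut_mem Diff_Diff_Int Int_absorb1 Int_commute)

lemma cut_empty: "cutof {} = {}"
  by (auto simp: cut_mem)

lemma ADD:
  assumes "a \<subseteq> V" "w \<in> V" "w \<notin> a"
  shows "card (cutof (insert w a)) + 2 * card {f\<in>E. w \<in> ends f \<and> ends f \<inter> a \<noteq> {}}
         = card (cutof a) + 3"
proof -
  have pe: "(if f \<in> cutof (insert w a) then 1 else 0) + 2 * (if w \<in> ends f \<and> ends f \<inter> a \<noteq> {} then 1 else 0)
        = (if f \<in> cutof a then 1 else 0) + (if w \<in> ends f then 1 else (0::nat))" if f: "f \<in> E" for f
  proof -
    obtain p q where pq: "p \<noteq> q" "ends f = {p,q}" using ends2[OF f] by blast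
    have "p \<in> V" "q \<in> V" using ends_sub[OF f] pq by auto
    then show ?thesis using pq f assms
      by (cases "p \<in> a"; cases "q \<in> a"; cases "p = w"; cases "q = w"; auto simp: cut_mem)
  qed
  have "card (cutof (insert w a)) + 2 * card {f\<in>E. w \<in> ends f \<and> ends f \<inter> a \<noteq> {}}
      = (\<Sum>f\<in>E. (if f \<in> cutof (insert w a) then 1 else 0) + 2 * (if w \<in> ends f \<and> ends f \<inter> a \<noteq> {} then 1 else 0))"
    by (simp add: card_cut_sum card_filter_sum[OF finE] sum.distrib sum_distrib_left)
  also have "\<dots> = (\<Sum>f\<in>E. (if f \<in> cutof a then 1 else 0) + (if w \<in> ends f then 1 else (0::nat)))"
    using pe by (rule sum.cong[OF refl])
  also have "\<dots> = card (cutof a) + card {f\<in>E. w \<in> ends f}"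
    by (simp add: card_cut_sum card_filter_sum[OF finE] sum.distrib)
  finally show ?thesis using deg3[OF assms(2)] by simp
qed

lemma d_single: "y \<in> V \<Longrightarrow> card (cutof {y}) = 3"
  using ADD[of "{}" y] by (simp add: cut_empty)

lemma S1:
  assumes "e \<in> E" "ends e = {u, v}" "u \<in> X" "u \<in> Y" "v \<notin> X" "v \<notin> Y"
  shows "card (cutof (X - Y)) + card (cutof (Y - X)) + 2 \<le> card (cutof X) + card (cutof Y)"
proof -
  have pe: "(if f \<in> cutof (X - Y) then 1 else 0) + (if f \<in> cutof (Y - X) then 1 else 0) + (if f = e then 2 else 0)
        \<le> (if f \<in> cutof X then 1 else 0) + (if f \<in> cutof Y then 1 else (0::nat))" if f: "f \<in> E" for f
  proof (cases "f = e")
    case True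
    have "v \<in> V" "u \<in> V" using ends_sub[OF assms(1)] assms(2) by auto
    then show ?thesis using True assms by (auto simp: cut_mem)
  next
    case False
    obtain p q where pq: "p \<noteq> q" "ends f = {p,q}" using ends2[OF f] by blast
    have "p \<in> V" "q \<in> V" using ends_sub[OF f] pq by auto
    then show ?thesis using pq f False
      by (cases "p \<in> X"; cases "q \<in> X"; cases "p \<in> Y"; cases "q \<in> Y"; auto simp: cut_mem)
  qed
  have "card (cutof (X - Y)) + card (cutof (Y - X)) + 2 =
     (\<Sum>f\<in>E. (if f \<in> cutof (X - Y) then 1 else 0) + (if f \<in> cutof (Y - X) then 1 else 0) + (if f = e then 2 else 0))"
    using assms(1) finE by (simp add: card_cut_sum sum.distrib)
  also have "\<dots> \<le> (\<Sum>f\<in>E. (if f \<in> cutof X then 1 else 0) + (if f \<in> cutof Y then 1 else (0::nat)))"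
    using pe by (rule sum_mono)
  also have "\<dots> = card (cutof X) + card (cutof Y)"
    by (simp add: card_cut_sum sum.distrib)
  finally show ?thesis .
qed

lemma S2:
  "card (cutof (X \<inter> Y)) + card (cutof (X \<union> Y)) \<le> card (cutof X) + card (cutof Y)"
proof -
  have pe: "(if f \<in> cutof (X \<inter> Y) then 1 else 0) + (if f \<in> cutof (X \<union> Y) then 1 else 0)
        \<le> (if f \<in> cutof X then 1 else 0) + (if f \<in> cutof Y then 1 else (0::nat))" if f: "f \<in> E" for f
  proof -
    obtain p q where pq: "p \<noteq> q" "ends f = {p,q}" using ends2[OF f] by blast
    have "p \<in> V" "q \<in> V" using ends_sub[OF f] pq by auto
    then show ?thesis using pq f
      by (cases "p \<in> X"; cases "q \<in> X"; cases "p \<in> Y"; cases "q \<in> Y"; auto simp: cut_mem)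
  qed
  have "card (cutof (X \<inter> Y)) + card (cutof (X \<union> Y)) =
     (\<Sum>f\<in>E. (if f \<in> cutof (X \<inter> Y) then 1 else 0) + (if f \<in> cutof (X \<union> Y) then 1 else 0))"
    by (simp add: card_cut_sum sum.distrib)
  also have "\<dots> \<le> (\<Sum>f\<in>E. (if f \<in> cutof X then 1 else 0) + (if f \<in> cutof Y then 1 else (0::nat)))"
    using pe by (rule sum_mono)
  also have "\<dots> = card (cutof X) + card (cutof Y)"
    by (simp add: card_cut_sum sum.distrib)
  finally show ?thesis .
qed

end


context cubicG begin

definition is_path :: "'v set \<Rightarrow> 'v list \<Rightarrow> 'e list \<Rightarrow> bool" where
  "is_path X vs es \<longleftrightarrow> vs \<noteq> [] \<and> length es = length vs - 1 \<and> distinct vs \<and> distinct es \<and>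
     set vs \<subseteq> X \<and> set es \<subseteq> E \<and> (\<forall>i < length es. ends (es ! i) = {vs ! i, vs ! Suc i})"

lemma path_cycle:
  assumes finX: "finite X"
    and deg2: "\<forall>w\<in>X. \<exists>f1 f2. f1 \<noteq> f2 \<and> f1 \<in> E \<and> f2 \<in> E \<and> w \<in> ends f1 \<and> w \<in> ends f2 \<and> ends f1 \<subseteq> X \<and> ends f2 \<subseteq> X"
  shows "is_path X vs es \<Longrightarrow> has_cycle_in E ends X"
proof (induction "card X - length vs" arbitrary: vs es rule: less_induct)
  case less
  note P = less.prems[unfolded is_path_def]
  define m where "m = length vs - 1"
  have lvs: "length vs = Suc m" using P m_def by (cases vs) auto
  have les: "length es = m" using P lvs by simp
  define z where "z = vs ! m"
  have zX: "z \<in> X" using P lvs z_def by (metis lessI nth_mem subsetD)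
  obtain f1 f2 where f: "f1 \<noteq> f2" "f1 \<in> E" "f2 \<in> E" "z \<in> ends f1" "z \<in> ends f2" "ends f1 \<subseteq> X" "ends f2 \<subseteq> X"
    using deg2 zX by blast
  obtain g where g: "g \<in> E" "z \<in> ends g" "ends g \<subseteq> X" "m > 0 \<Longrightarrow> g \<noteq> es ! (m - 1)"
    using f by metis
  have gnot: "g \<notin> set es"
  proof
    assume "g \<in> set es"
    then obtain i where i: "i < m" "es ! i = g" using les by (auto simp: in_set_conv_nth)
    then have "z \<in> {vs ! i, vs ! Suc i}" using P les g by metis
    moreover have "vs ! i \<noteq> z" using P i lvs z_def by (simp add: nth_eq_iff_index_eq)
    ultimately have "vs ! Suc i = z" by blast
    then have "Suc i = m" using P i lvs z_def by (simp add: nth_eq_iff_index_eq)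
    then show False using g(4) i by auto
  qed
  obtain p q where pq: "p \<noteq> q" "ends g = {p, q}" using ends2[OF g(1)] by blast
  obtain y where y: "ends g = {z, y}" "y \<noteq> z" using pq g(2) by auto
  have yX: "y \<in> X" using y g(3) by auto
  show ?case
  proof (cases "y \<in> set vs")
    case False
    have np: "is_path X (vs @ [y]) (es @ [g])"
      unfolding is_path_def
    proof (intro conjI allI impI)
      fix i assume i: "i < length (es @ [g])"
      show "ends ((es @ [g]) ! i) = {(vs @ [y]) ! i, (vs @ [y]) ! Suc i}"
      proof (cases "i < m")
        case True
        then show ?thesis using P les lvs by (auto simp: nth_append)
      next
        case False
        then have "i = m" using i les by simp
        then show ?thesis using les lvs y z_def by (simp add: nth_append)
      qed
    qed (use P les lvs gnot False g yX in auto)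
    have "length vs < card X"
    proof -
      have "set vs \<subset> X" using P False yX by auto
      then have "card (set vs) < card X" using finX by (simp add: psubset_card_mono)
      then show ?thesis using P by (simp add: distinct_card)
    qed
    then have "card X - length (vs @ [y]) < card X - length vs" by simp
    then show ?thesis using less.hyps np by blast
  next
    case True
    then obtain j where j: "j < length vs" "vs ! j = y" by (auto simp: in_set_conv_nth)
    have jm: "j < m" using j y z_def lvs by (metis less_Suc_eq)
    define cvs where "cvs = drop j vs"
    define ces where "ces = drop j es @ [g]"
    have lc: "length cvs = Suc m - j" "length ces = Suc m - j" using lvs les jm by (auto simp: cvs_def ces_def)
    show ?thesis unfolding has_cycle_in_def
    proof (intro exI[of _ cvs] exI[of _ ces] conjI allI impI)
      show "2 \<le> length cvs" using lc jm by simp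
      show "length ces = length cvs" using lc by simp
      show "distinct cvs" using P by (simp add: cvs_def)
      show "distinct ces" using P gnot by (auto simp: ces_def dest: in_set_dropD)
      show "set cvs \<subseteq> X" using P by (auto simp: cvs_def dest: in_set_dropD)
      show "set ces \<subseteq> E" using P g by (auto simp: ces_def dest: in_set_dropD)
      fix i assume i: "i < length cvs"
      show "ends (ces ! i) = {cvs ! i, cvs ! ((i + 1) mod length cvs)}"
      proof (cases "i < m - j")
        case True
        then have "(i + 1) mod length cvs = Suc i" using lc by simp
        moreover have "ces ! i = es ! (j + i)" using True les jm by (simp add: ces_def nth_append)
        moreover have "j + i < length es" using True les jm by simp
        ultimately show ?thesis using P lvs jm True by (simp add: cvs_def)
      next
        case False
        then have ii: "i = m - j" using i lc by simp
        then have "i + 1 = length cvs" using lc jm by simp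
        then have "(i + 1) mod length cvs = 0" by simp
        moreover have "ces ! i = g" using ii les jm by (simp add: ces_def nth_append)
        moreover have "cvs ! i = z" "cvs ! 0 = y" using ii jm lvs j z_def by (simp_all add: cvs_def)
        ultimately show ?thesis using y by auto
      qed
    qed
  qed
qed

lemma min_deg_cycle:
  assumes "finite X" "X \<noteq> {}"
    and "\<forall>w\<in>X. \<exists>f1 f2. f1 \<noteq> f2 \<and> f1 \<in> E \<and> f2 \<in> E \<and> w \<in> ends f1 \<and> w \<in> ends f2 \<and> ends f1 \<subseteq> X \<and> ends f2 \<subseteq> X"
  shows "has_cycle_in E ends X"
proof -
  obtain x where "x \<in> X" using assms by blast
  then have "is_path X [x] []" by (simp add: is_path_def)
  then show ?thesis using path_cycle assms by blast
qed

end


context cubicG begin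

lemma cycle_mono: "has_cycle_in E ends X \<Longrightarrow> X \<subseteq> Y \<Longrightarrow> has_cycle_in E ends Y"
  unfolding has_cycle_in_def by blast

lemma cyc_small:
  assumes "X \<subseteq> V" "card X \<ge> 2" "card (cutof X) \<le> 3"
  shows "has_cycle_in E ends X"
  using assms
proof (induction "card X" arbitrary: X rule: less_induct)
  case less
  have finX: "finite X" using less.prems finV finite_subset by blast
  show ?case
  proof (cases "\<forall>w\<in>X. \<exists>f1 f2. f1 \<noteq> f2 \<and> f1 \<in> E \<and> f2 \<in> E \<and> w \<in> ends f1 \<and> w \<in> ends f2 \<and> ends f1 \<subseteq> X \<and> ends f2 \<subseteq> X")
    case True
    moreover have "X \<noteq> {}" using less.prems by auto
    ultimately show ?thesis using min_deg_cycle finX by blast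
  next
    case False
    then obtain w where w: "w \<in> X" and nw: "\<not> (\<exists>f1 f2. f1 \<noteq> f2 \<and> f1 \<in> E \<and> f2 \<in> E \<and> w \<in> ends f1 \<and> w \<in> ends f2 \<and> ends f1 \<subseteq> X \<and> ends f2 \<subseteq> X)"
      by blast
    define a where "a = X - {w}"
    have X: "X = insert w a" using w a_def by auto
    have aV: "a \<subseteq> V" "w \<in> V" "w \<notin> a" using less.prems w a_def by auto
    define K where "K = {f\<in>E. w \<in> ends f \<and> ends f \<inter> a \<noteq> {}}"
    have "K \<subseteq> {f\<in>E. w \<in> ends f \<and> ends f \<subseteq> X}"
    proof
      fix f assume f: "f \<in> K"
      then have fE: "f \<in> E" by (simp add: K_def)
      obtain p q where pq: "p \<noteq> q" "ends f = {p, q}" using ends2[OF fE] by blast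
      then show "f \<in> {f\<in>E. w \<in> ends f \<and> ends f \<subseteq> X}" using f X aV(3) by (auto simp: K_def)
    qed
    moreover have "finite K" using finE by (simp add: K_def)
    ultimately have "card K \<le> Suc 0"
      unfolding card_le_Suc0_iff_eq[OF \<open>finite K\<close>] using nw by blast
    have eq: "card (cutof X) + 2 * card K = card (cutof a) + 3"
      using ADD[OF aV] X K_def by simp
    have ca: "card a = card X - 1" using a_def w finX by simp
    show ?thesis
    proof (cases "card a \<ge> 2")
      case True
      have lt: "card a < card X" using ca less.prems by simp
      have c3: "card (cutof a) \<le> 3" using eq \<open>card K \<le> Suc 0\<close> less.prems(3) by simp
      have "has_cycle_in E ends a" using less.hyps[OF lt aV(1) True c3] .
      then show ?thesis using cycle_mono a_def by blast
    next
      case False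
      then have "card a = 1" using ca less.prems by simp
      then obtain y where "a = {y}" by (auto simp: card_Suc_eq)
      then have "card (cutof a) = 3" using d_single aV by auto
      then show ?thesis using eq \<open>card K \<le> Suc 0\<close> less.prems by simp
    qed
  qed
qed

lemma cp_compl: "cyclic_partition V E ends A B \<Longrightarrow> B = V - A \<and> A \<subseteq> V"
  unfolding cyclic_partition_def by blast

lemma cp_sym: "cyclic_partition V E ends A B \<Longrightarrow> cyclic_partition V E ends B A"
  unfolding cyclic_partition_def by blast

lemma edge_cut_sym: "edge_cut E ends A B = edge_cut E ends B A"
  unfolding edge_cut_def by blast

lemma tF:
  assumes AB: "cyclic_partition V E ends A0 B0" "F = edge_cut E ends A0 B0" "card F = 4"
   and part: "A0 \<union> B0 = V" "A0 \<inter> B0 = {}"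
  shows "F = edge_cut E ends B0 (V - B0) \<and> card (cutof B0) = 4 \<and> cyclic_partition V E ends B0 (V - B0)"
proof -
      have A0: "A0 = V - B0" using part by auto
      have h1: "B0 \<subseteq> V" using part by auto
      have FB: "F = edge_cut E ends B0 (V - B0)" using AB(2) edge_cut_sym[of A0 B0] A0 by simp
      have h5: "card (cutof B0) = 4" using AB(3) FB unfolding cutof_def by simp
      have h4: "cyclic_partition V E ends B0 (V - B0)" using cp_sym[OF AB(1)] A0 by simp
      show ?thesis using FB h5 h4 by blast
qed

context
  assumes c4: "cyclically_4_edge_connected V E ends"
begin

lemma ge4:
  assumes "X \<subseteq> V" "card X \<ge> 2" "card (V - X) \<ge> 2"
  shows "card (cutof X) \<ge> 4"
proof (rule ccontr)
  assume "\<not> ?thesis"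
  then have h: "card (cutof X) \<le> 3" by simp
  have c1: "has_cycle_in E ends X" using cyc_small assms h by blast
  have h2: "card (cutof (V - X)) \<le> 3" using h cut_compl[OF assms(1)] by simp
  have c2: "has_cycle_in E ends (V - X)" using cyc_small[OF _ assms(3) h2] by blast
  have "cyclic_partition V E ends X (V - X)"
    unfolding cyclic_partition_def using assms c1 c2 by auto
  then have "card (cutof X) \<ge> 4" using c4 by (simp add: cyclically_4_edge_connected_def cutof_def)
  then show False using h by simp
qed

lemma side3:
  assumes cp: "cyclic_partition V E ends A B"
  shows "card A \<ge> 3"
proof (rule ccontr)
  assume "\<not> ?thesis"
  then have cA: "card A \<le> 2" by simp
  have BA: "B = V - A" "A \<subseteq> V" using cp_compl[OF cp] by auto
  have finA: "finite A" using BA finV finite_subset by blast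
  obtain vs es where c: "length vs \<ge> 2" "length es = length vs" "distinct vs" "distinct es"
     "set vs \<subseteq> A" "set es \<subseteq> E" "\<forall>i<length vs. ends (es ! i) = {vs ! i, vs ! ((i + 1) mod length vs)}"
    using cp unfolding cyclic_partition_def has_cycle_in_def by blast
  have "length vs \<le> card A" using c card_mono[OF finA c(5)] by (simp add: distinct_card)
  then have l2: "length vs = 2" using c cA by simp
  define p where "p = vs ! 0"
  define q where "q = vs ! 1"
  have pq: "p \<noteq> q" using c l2 by (simp add: p_def q_def nth_eq_iff_index_eq)
  have "set vs = {p, q}" using l2 p_def q_def by (cases vs rule: list.exhaust; cases "tl vs"; auto)
  moreover have "card (set vs) = card A"
    using l2 c(3) cA \<open>length vs \<le> card A\<close> by (simp add: distinct_card)
  ultimately have Apq: "A = {p, q}"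
    using c(5) finA card_subset_eq by metis
  have e0: "ends (es ! 0) = {p, q}" and e1: "ends (es ! 1) = {p, q}"
    using c(7) l2 by (auto simp: p_def q_def)
  have d01: "es ! 0 \<noteq> es ! 1" using c l2 by (simp add: nth_eq_iff_index_eq)
  have inE: "es ! 0 \<in> E" "es ! 1 \<in> E" using c l2 by auto
  have pV: "p \<in> V" "q \<in> V" using Apq BA by auto
  have "{es ! 0, es ! 1} \<subseteq> {f\<in>E. q \<in> ends f \<and> ends f \<inter> {p} \<noteq> {}}" using e0 e1 inE by auto
  then have "2 \<le> card {f\<in>E. q \<in> ends f \<and> ends f \<inter> {p} \<noteq> {}}"
    using d01 card_mono[of "{f\<in>E. q \<in> ends f \<and> ends f \<inter> {p} \<noteq> {}}" "{es ! 0, es ! 1}"] finE by auto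
  moreover have "card (cutof (insert q {p})) + 2 * card {f\<in>E. q \<in> ends f \<and> ends f \<inter> {p} \<noteq> {}} = card (cutof {p}) + 3"
    using ADD[of "{p}" q] pV pq by auto
  moreover have "insert q {p} = A" using Apq by auto
  ultimately have "card (cutof A) \<le> 2" using d_single[OF pV(1)] by simp
  moreover have "card (cutof A) \<ge> 4" using c4 cp BA by (simp add: cyclically_4_edge_connected_def cutof_def)
  ultimately show False by simp
qed

lemma ge3:
  assumes "Y \<subseteq> V" "Y \<noteq> {}" "card (V - Y) \<ge> 2"
  shows "card (cutof Y) \<ge> 3 \<and> (card (cutof Y) \<le> 3 \<longrightarrow> (\<exists>w. Y = {w}))"
proof (cases "card Y \<ge> 2")
  case True
  then have "card (cutof Y) \<ge> 4" using ge4[OF assms(1) True assms(3)] by simp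
  then show ?thesis by simp
next
  case False
  have "finite Y" using assms finV finite_subset by blast
  then have "card Y = 1" using False assms by (cases "card Y") auto
  then obtain w where "Y = {w}" by (auto simp: card_Suc_eq)
  then show ?thesis using d_single assms by auto
qed

lemma card2: "u \<in> Z \<Longrightarrow> v \<in> Z \<Longrightarrow> u \<noteq> v \<Longrightarrow> finite Z \<Longrightarrow> card Z \<ge> 2"
  using card_mono[of Z "{u, v}"] by auto

lemma cross:
  assumes e: "e \<in> E" "ends e = {u, v}" "u \<noteq> v"
    and A: "A \<subseteq> V" "u \<in> A" "v \<notin> A" "cyclic_partition V E ends A (V - A)" "card (cutof A) = 4"
    and C: "C \<subseteq> V" "u \<in> C" "v \<notin> C" "cyclic_partition V E ends C (V - C)" "card (cutof C) = 4"
  shows "A \<subseteq> C \<or> C \<subseteq> A"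
proof (rule ccontr)
  assume nc: "\<not> ?thesis"
  have uv: "u \<in> V" "v \<in> V" using ends_sub[OF e(1)] e(2) by auto
  have s1: "card (cutof (A - C)) + card (cutof (C - A)) + 2 \<le> 8"
    using S1[OF e(1,2) A(2) C(2) A(3) C(3)] A(5) C(5) by simp
  have fin: "finite (V - (A - C))" "finite (V - (C - A))" using finV by auto
  have g1: "card (V - (A - C)) \<ge> 2" using card2[OF _ _ e(3) fin(1)] uv A C by auto
  have g2: "card (V - (C - A)) \<ge> 2" using card2[OF _ _ e(3) fin(2)] uv A C by auto
  have ne: "A - C \<noteq> {}" "C - A \<noteq> {}" using nc by auto
  have sub: "A - C \<subseteq> V" "C - A \<subseteq> V" using A(1) C(1) by auto
  note gb = ge3[OF sub(1) ne(1) g1]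
  note gc = ge3[OF sub(2) ne(2) g2]
  have "card (cutof (A - C)) \<le> 3" "card (cutof (C - A)) \<le> 3" using gb gc s1 by linarith+
  then obtain w x where w: "A - C = {w}" and x: "C - A = {x}" using gb gc by blast
  define a where "a = A \<inter> C"
  define dd where "dd = V - (A \<union> C)"
  have Aw: "A = insert w a" "w \<notin> a" using w a_def by auto
  have VAx: "V - A = insert x dd" "x \<notin> dd" using x dd_def C(1) by auto
  have aVV: "a \<subseteq> V" "dd \<subseteq> V" using A(1) by (auto simp: a_def dd_def)
  then have finV': "finite a" "finite dd" using finite_subset[OF _ finV] by blast+
  have "card A \<ge> 3" using side3[OF A(4)] .
  then have ca: "card a \<ge> 2" using Aw finV' by simp
  have "card (V - A) \<ge> 3" using side3[OF cp_sym[OF A(4)]] .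
  then have cd: "card dd \<ge> 2" using VAx finV' by simp
  have wx: "w \<noteq> x" "w \<in> V" "x \<in> V" using w x A C by auto
  have "card (V - a) \<ge> 2" using card2[of w "V - a" x] wx w x finV by (auto simp: a_def)
  then have da: "card (cutof a) \<ge> 4" using ge4[of a] ca A by (auto simp: a_def)
  have "card (V - dd) \<ge> 2" using card2[of w "V - dd" x] wx w x finV by (auto simp: dd_def)
  then have dd4: "card (cutof dd) \<ge> 4" using ge4[of dd] cd by (auto simp: dd_def)
  have "cutof dd = cutof (A \<union> C)" using cut_compl[of "A \<union> C"] A C by (simp add: dd_def)
  then have "card (cutof a) + card (cutof dd) \<le> 8"
    using S2[of A C] A(5) C(5) by (simp add: a_def)
  then have "card (cutof a) = 4" using da dd4 by simp
  moreover have "card (cutof (insert w a)) + 2 * card {f\<in>E. w \<in> ends f \<and> ends f \<inter> a \<noteq> {}} = card (cutof a) + 3"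
    using ADD[OF aVV(1) wx(2) Aw(2)] .
  moreover have "card (cutof (insert w a)) = 4" using A(5) Aw(1) by simp
  ultimately have "2 * card {f\<in>E. w \<in> ends f \<and> ends f \<inter> a \<noteq> {}} = 3" by simp
  then have "even (3::nat)" by (metis dvd_triv_left)
  then show False by simp
qed

end
end


lemma chain_enum:
  "finite S \<Longrightarrow> (\<forall>X\<in>S. \<forall>Y\<in>S. X \<subseteq> Y \<or> Y \<subseteq> X) \<Longrightarrow>
   \<exists>(k::nat) (A :: nat \<Rightarrow> 'a set). (\<forall>i\<in>{1..k}. A i \<in> S) \<and> (\<forall>i\<in>{1..<k}. A i \<subseteq> A (Suc i)) \<and>
      (\<forall>X\<in>S. \<exists>i\<in>{1..k}. X = A i)"
proof (induction "card S" arbitrary: S)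
  case 0
  then show ?case by (intro exI[of _ 0]) auto
next
  case (Suc n)
  then have ne: "S \<noteq> {}" by auto
  have ch: "subset.chain UNIV S" using Suc.prems by (auto simp: subset.chain_def)
  define M where "M = \<Union>S"
  have MS: "M \<in> S" using Union_in_chain[OF Suc.prems(1) ne ch] by (simp add: M_def)
  have "n = card (S - {M})" using Suc.hyps(2) MS Suc.prems by simp
  then obtain k A where kA: "\<forall>i\<in>{1..k}. A i \<in> S - {M}" "\<forall>i\<in>{1..<k}. A i \<subseteq> A (Suc i)"
      "\<forall>X\<in>S - {M}. \<exists>i\<in>{1..k}. X = A i"
    using Suc.hyps(1)[of "S - {M}"] Suc.prems by auto
  define A' where "A' = A(Suc k := M)"
  show ?case
  proof (intro exI[of _ "Suc k"] exI[of _ A'] conjI ballI)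
    fix i assume "i \<in> {1..Suc k}"
    then show "A' i \<in> S" using kA MS by (cases "i = Suc k") (auto simp: A'_def)
  next
    fix i assume i: "i \<in> {1..<Suc k}"
    show "A' i \<subseteq> A' (Suc i)"
    proof (cases "i = k")
      case True
      then have "A i \<in> S" using kA i by auto
      then show ?thesis using True by (auto simp: A'_def M_def)
    next
      case False
      then show ?thesis using kA i by (auto simp: A'_def)
    qed
  next
    fix X assume X: "X \<in> S"
    show "\<exists>i\<in>{1..Suc k}. X = A' i"
    proof (cases "X = M")
      case True
      then show ?thesis by (intro bexI[of _ "Suc k"]) (auto simp: A'_def)
    next
      case False
      then obtain i where "i \<in> {1..k}" "X = A i" using kA X by blast
      then show ?thesis by (intro bexI[of _ i]) (auto simp: A'_def)
    qed
  qed
qed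

theorem mainTheorem13:
  fixes V :: "'v set" and E :: "'e set" and ends :: "'e \<Rightarrow> 'v set" and e :: 'e
  assumes "cubic V E ends"
    and "cyclically_4_edge_connected V E ends"
    and "e \<in> E"
    and "\<exists>F. cyclic_k_edge_cut 4 V E ends F \<and> e \<in> F"
  shows "\<exists>(k::nat) (A :: nat \<Rightarrow> 'v set).
           (\<forall>i\<in>{1..k}. A i \<subseteq> V) \<and>
           (\<forall>i\<in>{1..<k}. A i \<subseteq> A (Suc i)) \<and>
           (\<forall>F. cyclic_k_edge_cut 4 V E ends F \<and> e \<in> F \<longrightarrow>
              (\<exists>i\<in>{1..k}. F = edge_cut E ends (A i) (V - A i)))"
proof -
  interpret G: cubicG V E ends using assms(1) by (simp add: cubicG_def)
  obtain u v where uv: "u \<noteq> v" "ends e = {u, v}" using G.ends2[OF assms(3)] by blast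
  define S where "S = {A. A \<subseteq> V \<and> u \<in> A \<and> v \<notin> A \<and> cyclic_partition V E ends A (V - A) \<and> card (G.cutof A) = 4}"
  have "S \<subseteq> Pow V" by (auto simp: S_def)
  then have finS: "finite S" using G.finV finite_subset by blast
  have chS: "\<forall>X\<in>S. \<forall>Y\<in>S. X \<subseteq> Y \<or> Y \<subseteq> X"
  proof (intro ballI)
    fix X Y assume "X \<in> S" "Y \<in> S"
    then have X: "X \<subseteq> V" "u \<in> X" "v \<notin> X" "cyclic_partition V E ends X (V - X)" "card (G.cutof X) = 4"
      and Y: "Y \<subseteq> V" "u \<in> Y" "v \<notin> Y" "cyclic_partition V E ends Y (V - Y)" "card (G.cutof Y) = 4"
      unfolding S_def by blast+
    show "X \<subseteq> Y \<or> Y \<subseteq> X" using G.cross[OF assms(2) assms(3) uv(2) uv(1) X Y] .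
  qed
  obtain k A where kA: "\<forall>i\<in>{1..k}. A i \<in> S" "\<forall>i\<in>{1..<k}. A i \<subseteq> A (Suc i)"
      "\<forall>X\<in>S. \<exists>i\<in>{1..k}. X = A i"
    using chain_enum[OF finS chS] by blast
  show ?thesis
  proof (intro exI[of _ k] exI[of _ A] conjI allI impI)
    show "\<forall>i\<in>{1..k}. A i \<subseteq> V" using kA(1) by (auto simp: S_def)
    show "\<forall>i\<in>{1..<k}. A i \<subseteq> A (Suc i)" using kA(2) .
    fix F assume F: "cyclic_k_edge_cut 4 V E ends F \<and> e \<in> F"
    then obtain A0 B0 where AB: "cyclic_partition V E ends A0 B0" "F = edge_cut E ends A0 B0" "card F = 4"
      by (auto simp: cyclic_k_edge_cut_def)
    have eF: "ends e \<inter> A0 \<noteq> {}" "ends e \<inter> B0 \<noteq> {}" using F AB by (auto simp: edge_cut_def)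
    have part: "A0 \<union> B0 = V" "A0 \<inter> B0 = {}" using AB(1) by (auto simp: cyclic_partition_def)
    obtain X where X: "X \<in> S" "F = edge_cut E ends X (V - X)"
    proof (cases "u \<in> A0")
      case True
      have h3: "v \<notin> A0" using eF uv part True by auto
      have B0: "B0 = V - A0" using part by auto
      have h1: "A0 \<subseteq> V" using part by auto
      have FA: "F = edge_cut E ends A0 (V - A0)" using AB(2) B0 by simp
      have h5: "card (G.cutof A0) = 4" using AB(3) FA unfolding G.cutof_def by simp
      have h4: "cyclic_partition V E ends A0 (V - A0)" using AB(1) B0 by simp
      have S0: "A0 \<in> S" unfolding S_def mem_Collect_eq using h1 True h3 h4 h5 by blast
      show ?thesis using FA by (rule that[OF S0])
    next
      case False
      have "u \<in> V" using G.ends_sub[OF assms(3)] uv(2) by auto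
      then have uB: "u \<in> B0" using part(1) False by blast
      have "v \<in> A0" using eF(1) uv(2) False by auto
      then have h3: "v \<notin> B0" using part(2) by blast
      note tf = G.tF[OF AB(1,2,3) part]
      have FB: "F = edge_cut E ends B0 (V - B0)" using tf by blast
      have h5: "card (G.cutof B0) = 4" using tf by blast
      have h4: "cyclic_partition V E ends B0 (V - B0)" using tf by blast
      have h1: "B0 \<subseteq> V" using part by blast
      have S0: "B0 \<in> S" unfolding S_def mem_Collect_eq using h1 uB h3 h4 h5 by blast
      show ?thesis using FB by (rule that[OF S0])
    qed
    obtain i where i: "i \<in> {1..k}" "X = A i" using kA(3) X(1) by blast
    show "\<exists>i\<in>{1..k}. F = edge_cut E ends (A i) (V - A i)"
      using i X(2) by (intro bexI[of _ i]) simp_all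
  qed
qed


end
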